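(* Let $\alpha\in\mathbb{C}\setminus\{0\}$, let $\pi$ be an $O(m+n+1,m+n)$-projection onto $V\subset\mathbb{C}^N$, and let $f(\lambda)$ be a meromorphic map into $SL(N,\mathbb{C})$ satisfying $\sigma(f(-\lambda))=f(\lambda)$ which is holomorphic (with holomorphic inverse) at $\lambda=\alpha$ and $\lambda=-\alpha$. Assume the bilinear form restricted to $\tilde V:=f(\alpha)^{-1}(V)$ is nondegenerate and let $\tilde\pi$ be the $O(m+n+1,m+n)$-projection onto $\tilde V$. Then $\tilde f(\lambda)=k_{\alpha,\pi}(\lambda)f(\lambda)k_{\alpha,\tilde\pi}(\lambda)^{-1}$ is holomorphic at $\lambda=\alpha$ and at $\lambda=-\alpha$.
   Context: $N=2m+2n+1$; $C_{m,n}=\mathrm{diag}(\sum_{i=1}^{2m}e_{i,2m+1-i},\sum_{i=1}^{2n+1}(-1)^{n+i-1}e_{i,2n+2-i})$ (symmetric, $C_{m,n}^2=I$); $\sigma(Y)=(C_{m,n}Y^tC_{m,n}^{-1})^{-1}$. $\mathbb{C}^{N}$ carries the symmetric bilinear form $\langle X,Y\rangle=X^tC_{m,n}Y$; $A^\sharp$ is the adjoint of $A$ for this form. For a subspace $V$ on which the form is nondegenerate, the $O(m+n+1,m+n)$-projection onto $V$ is the linear map $\pi$ with $\pi^2=\pi=\pi^\sharp$ and image $V$ (kernel $V^\perp$); $\pi^\perp:=I-\pi$. For $\alpha\ne0$, $k_{\alpha,\pi}(\lambda)=I+\frac{2\alpha}{\lambda-\alpha}\pi^\perp$; one has $k_{\alpha,\pi}^{-1}=k_{-\alpha,\pi}$.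 *)

theory Defs
  imports "HOL-Complex_Analysis.Complex_Analysis" "Jordan_Normal_Form.Determinant"
begin

definition Nd :: "nat \<Rightarrow> nat \<Rightarrow> nat" where
  "Nd m n = 2*m + 2*n + 1"

definition mat_inv :: "complex mat \<Rightarrow> complex mat" where
  "mat_inv A = (SOME B. B \<in> carrier_mat (dim_row A) (dim_row A) \<and>
                        A * B = 1\<^sub>m (dim_row A) \<and> B * A = 1\<^sub>m (dim_row A))"

text \<open>The matrix C_{m,n}, 0-based indices. First block: entries (i, 2m-1-i) equal 1.
  Second block (1-based i',j' in 1..2n+1): entry (i', 2n+2-i') equals (-1)^(n+i'-1).\<close>
definition Cmat :: "nat \<Rightarrow> nat \<Rightarrow> complex mat" where
  "Cmat m n = mat (Nd m n) (Nd m n) (\<lambda>(i,j).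
     if i < 2*m \<and> j < 2*m then (if i + j = 2*m - 1 then 1 else 0)
     else if 2*m \<le> i \<and> 2*m \<le> j then
       (if (i - 2*m + 1) + (j - 2*m + 1) = 2*n + 2 then (-1) ^ (n + (i - 2*m + 1) - 1) else 0)
     else 0)"

text \<open>sigma(Y) = (C Y^t C^{-1})^{-1}\<close>
definition sigma_inv :: "nat \<Rightarrow> nat \<Rightarrow> complex mat \<Rightarrow> complex mat" where
  "sigma_inv m n Y = mat_inv (Cmat m n * transpose_mat Y * mat_inv (Cmat m n))"

definition bilin :: "nat \<Rightarrow> nat \<Rightarrow> complex vec \<Rightarrow> complex vec \<Rightarrow> complex" where
  "bilin m n X Y = X \<bullet> (Cmat m n *\<^sub>v Y)"

text \<open>Adjoint with respect to the form: <A X, Y> = <X, A^sharp Y>, i.e. A^sharp = C^{-1} A^t C.\<close>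
definition sharp :: "nat \<Rightarrow> nat \<Rightarrow> complex mat \<Rightarrow> complex mat" where
  "sharp m n A = mat_inv (Cmat m n) * transpose_mat A * Cmat m n"

definition nondegenerate_on :: "nat \<Rightarrow> nat \<Rightarrow> complex vec set \<Rightarrow> bool" where
  "nondegenerate_on m n W \<longleftrightarrow> (\<forall>x\<in>W. (\<forall>y\<in>W. bilin m n x y = 0) \<longrightarrow> x = 0\<^sub>v (Nd m n))"

definition O_proj :: "nat \<Rightarrow> nat \<Rightarrow> complex mat \<Rightarrow> complex vec set \<Rightarrow> bool" where
  "O_proj m n P V \<longleftrightarrow> P \<in> carrier_mat (Nd m n) (Nd m n) \<and> P * P = P \<and> sharp m n P = P \<and>
      (\<lambda>x. P *\<^sub>v x) ` carrier_vec (Nd m n) = V"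

definition kmat :: "nat \<Rightarrow> nat \<Rightarrow> complex \<Rightarrow> complex mat \<Rightarrow> complex \<Rightarrow> complex mat" where
  "kmat m n a P z = 1\<^sub>m (Nd m n) + (2 * a / (z - a)) \<cdot>\<^sub>m (1\<^sub>m (Nd m n) - P)"

definition holo_at :: "nat \<Rightarrow> (complex \<Rightarrow> complex mat) \<Rightarrow> complex \<Rightarrow> bool" where
  "holo_at N F z0 \<longleftrightarrow> (\<forall>i<N. \<forall>j<N. \<exists>g. g analytic_on {z0} \<and>
       (\<forall>\<^sub>F w in at z0. F w $$ (i,j) = g w))"

end

theory Submission
  imports Defs
begin


definition sgC :: "nat \<Rightarrow> nat \<Rightarrow> nat \<Rightarrow> nat" where
  "sgC m n i = (if i < 2*m then 2*m-1-i else 4*m+2*n-i)"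
definition snC :: "nat \<Rightarrow> nat \<Rightarrow> nat \<Rightarrow> complex" where
  "snC m n i = (if i < 2*m then 1 else (-1)^(n+i-2*m))"

lemma Cmat_carrier: "Cmat m n \<in> carrier_mat (Nd m n) (Nd m n)"
  unfolding Cmat_def by auto

lemma Cmat_entry: assumes "i < Nd m n" "k < Nd m n"
  shows "Cmat m n $$ (i,k) = (if k = sgC m n i then snC m n i else 0)"
  using assms unfolding Cmat_def sgC_def snC_def Nd_def
  by (auto simp: algebra_simps)

lemma Cmat_dims[simp]: "dim_row (Cmat m n) = Nd m n" "dim_col (Cmat m n) = Nd m n"
  unfolding Cmat_def by auto

lemma sgC_lt: "i < Nd m n \<Longrightarrow> sgC m n i < Nd m n"
  unfolding sgC_def Nd_def by auto
lemma sgC_sgC: "i < Nd m n \<Longrightarrow> sgC m n (sgC m n i) = i"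
  unfolding sgC_def Nd_def by auto
lemma snC_sgC: "i < Nd m n \<Longrightarrow> snC m n (sgC m n i) = snC m n i"
proof -
  assume i: "i < Nd m n"
  show ?thesis
  proof (cases "i < 2*m")
    case True thus ?thesis unfolding sgC_def snC_def by auto
  next
    case False
    have s: "(n + (4*m+2*n-i) - 2*m) + (n + i - 2*m) = 2*(2*n)" using False i unfolding Nd_def by linarith
    have e: "even (n + (4*m+2*n-i) - 2*m) = even (n + i - 2*m)"
      by (metis s even_add dvd_triv_left)
    have "(-1::complex)^(n + (4*m+2*n-i) - 2*m) = (-1)^(n + i - 2*m)"
      using e by (simp add: minus_one_power_iff)
    thus ?thesis using False i unfolding sgC_def snC_def Nd_def by auto
  qed
qed
lemma snC_sq: "snC m n i * snC m n i = 1"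
  unfolding snC_def by (auto simp flip: power_add simp: mult_2[symmetric] power_mult)

lemma Cmat_sq: "Cmat m n * Cmat m n = 1\<^sub>m (Nd m n)"
proof (rule eq_matI)
  fix i j assume i: "i < dim_row (1\<^sub>m (Nd m n))" and j: "j < dim_col (1\<^sub>m (Nd m n) :: complex mat)"
  hence i: "i < Nd m n" and j: "j < Nd m n" by auto
  have "(Cmat m n * Cmat m n) $$ (i,j) = (\<Sum>k\<in>{0..<Nd m n}. Cmat m n $$ (i,k) * Cmat m n $$ (k,j))"
    using i j Cmat_carrier[of m n] by (auto simp: scalar_prod_def)
  also have "\<dots> = (\<Sum>k\<in>{0..<Nd m n}. if k = sgC m n i then snC m n i * Cmat m n $$ (k,j) else 0)"
    by (rule sum.cong) (use i in \<open>auto simp: Cmat_entry\<close>)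
  also have "\<dots> = snC m n i * Cmat m n $$ (sgC m n i, j)"
    using sgC_lt[OF i] by (simp add: sum.delta)
  also have "\<dots> = 1\<^sub>m (Nd m n) $$ (i,j)"
    using i j sgC_lt[OF i] sgC_sgC[OF i] snC_sgC[OF i] snC_sq[of m n i]
    by (auto simp: Cmat_entry)
  finally show "(Cmat m n * Cmat m n) $$ (i,j) = 1\<^sub>m (Nd m n) $$ (i,j)" .
qed (auto simp: Cmat_carrier[THEN carrier_matD(1)] Cmat_carrier[THEN carrier_matD(2)])

lemma Cmat_transpose: "transpose_mat (Cmat m n) = Cmat m n"
proof (rule eq_matI)
  fix i j assume "i < dim_row (Cmat m n)" "j < dim_col (Cmat m n)"
  hence i: "i < Nd m n" and j: "j < Nd m n" using Cmat_carrier[of m n] by auto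
  show "transpose_mat (Cmat m n) $$ (i,j) = Cmat m n $$ (i,j)"
    using i j sgC_sgC[OF i] sgC_sgC[OF j] snC_sgC[OF i] snC_sgC[OF j]
    by (auto simp: Cmat_entry)
qed auto



lemma mat_inv_eq: assumes A: "A \<in> carrier_mat k k" and B: "B \<in> carrier_mat k k"
  and AB: "A * B = 1\<^sub>m k"
  shows "mat_inv A = B"
proof -
  have BA: "B * A = 1\<^sub>m k" using mat_mult_left_right_inverse[OF A B AB] .
  have dr: "dim_row A = k" using A by auto
  let ?P = "\<lambda>B. B \<in> carrier_mat k k \<and> A * B = 1\<^sub>m k \<and> B * A = 1\<^sub>m k"
  have "?P B" using B AB BA by auto
  hence P: "?P (mat_inv A)" unfolding mat_inv_def dr by (rule someI)
  have "mat_inv A = mat_inv A * (A * B)" using P AB right_mult_one_mat by metis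
  also have "\<dots> = (mat_inv A * A) * B" using P A B assoc_mult_mat[of "mat_inv A" k k A k B k] by simp
  also have "\<dots> = B" using P B by simp
  finally show ?thesis .
qed

lemma one_smult_one: "(1::complex) \<cdot>\<^sub>m 1\<^sub>m k = 1\<^sub>m k"
  by (rule eq_matI) auto

lemma mat_inv_det1: assumes A: "A \<in> carrier_mat k k" and d: "det A = 1"
  shows "mat_inv A \<in> carrier_mat k k" "A * mat_inv A = 1\<^sub>m k" "mat_inv A * A = 1\<^sub>m k"
proof -
  have e: "A * adj_mat A = 1\<^sub>m k" using adj_mat(2)[OF A] d one_smult_one by simp
  have m: "mat_inv A = adj_mat A" by (rule mat_inv_eq[OF A adj_mat(1)[OF A] e])
  show "mat_inv A \<in> carrier_mat k k" "A * mat_inv A = 1\<^sub>m k" "mat_inv A * A = 1\<^sub>m k"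
    using m e adj_mat(1)[OF A] mat_mult_left_right_inverse[OF A adj_mat(1)[OF A] e] by auto
qed

lemma mat_zeroI: fixes A :: "complex mat" assumes A: "A \<in> carrier_mat k k" and h: "\<And>x. x \<in> carrier_vec k \<Longrightarrow> A *\<^sub>v x = 0\<^sub>v k"
  shows "A = 0\<^sub>m k k"
proof (rule eq_matI)
  fix i j assume "i < dim_row (0\<^sub>m k k :: complex mat)" "j < dim_col (0\<^sub>m k k :: complex mat)"
  hence i: "i < k" and j: "j < k" by auto
  have "A $$ (i,j) = (A *\<^sub>v unit_vec k j) $ i"
    using A i j by (simp add: scalar_prod_right_unit)
  also have "\<dots> = 0" using h[of "unit_vec k j"] i by simp
  finally show "A $$ (i,j) = 0\<^sub>m k k $$ (i,j)" using i j by simp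
qed (use A in auto)

definition ent_an :: "nat \<Rightarrow> (complex \<Rightarrow> complex mat) \<Rightarrow> complex \<Rightarrow> bool" where
  "ent_an k F z \<longleftrightarrow> (\<forall>i<k. \<forall>j<k. (\<lambda>w. F w $$ (i,j)) analytic_on {z})"

lemma mult_entry: assumes "A \<in> carrier_mat k k" "B \<in> carrier_mat k k" "i < k" "j < k"
  shows "(A * B) $$ (i,j) = (\<Sum>l<k. A $$ (i,l) * B $$ (l,j))"
proof -
  have "(A * B) $$ (i,j) = row A i \<bullet> col B j" using assms by auto
  also have "\<dots> = (\<Sum>l\<in>{0..<k}. row A i $ l * col B j $ l)"
    unfolding scalar_prod_def using assms by auto
  also have "\<dots> = (\<Sum>l<k. A $$ (i,l) * B $$ (l,j))"
    unfolding lessThan_atLeast0 using assms by (intro sum.cong) auto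
  finally show ?thesis .
qed

lemma ent_an_mult: assumes "\<And>w. F w \<in> carrier_mat k k" "\<And>w. G w \<in> carrier_mat k k"
  "ent_an k F z" "ent_an k G z"
  shows "ent_an k (\<lambda>w. F w * G w) z"
  unfolding ent_an_def
proof (intro allI impI)
  fix i j assume i: "i < k" and j: "j < k"
  have "(\<lambda>w. \<Sum>l<k. F w $$ (i,l) * G w $$ (l,j)) analytic_on {z}"
    using assms(3,4) i j unfolding ent_an_def
    by (intro analytic_on_sum analytic_on_mult) auto
  thus "(\<lambda>w. (F w * G w) $$ (i,j)) analytic_on {z}"
    using mult_entry[OF assms(1,2) i j] by simp
qed

lemma ent_an_const: "ent_an k (\<lambda>w. A) z"
  unfolding ent_an_def by auto

lemma ent_an_add: assumes "\<And>w. F w \<in> carrier_mat k k" "\<And>w. G w \<in> carrier_mat k k"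
  "ent_an k F z" "ent_an k G z"
  shows "ent_an k (\<lambda>w. F w + G w) z"
  unfolding ent_an_def
proof (intro allI impI)
  fix i j assume i: "i < k" and j: "j < k"
  have e: "\<And>w. (F w + G w) $$ (i,j) = F w $$ (i,j) + G w $$ (i,j)"
    using assms(1,2) i j by (metis carrier_matD index_add_mat(1))
  show "(\<lambda>w. (F w + G w) $$ (i,j)) analytic_on {z}"
    unfolding e using assms(3,4) i j unfolding ent_an_def by (auto intro!: analytic_on_add)
qed

lemma ent_an_smult: assumes "\<And>w. F w \<in> carrier_mat k k" "c analytic_on {z}"
  "ent_an k F z"
  shows "ent_an k (\<lambda>w. c w \<cdot>\<^sub>m F w) z"
  unfolding ent_an_def
proof (intro allI impI)
  fix i j assume i: "i < k" and j: "j < k"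
  have e: "\<And>w. (c w \<cdot>\<^sub>m F w) $$ (i,j) = c w * F w $$ (i,j)"
    using assms(1) i j by (metis carrier_matD index_smult_mat(1))
  show "(\<lambda>w. (c w \<cdot>\<^sub>m F w) $$ (i,j)) analytic_on {z}"
    unfolding e using assms(2,3) i j unfolding ent_an_def by (auto intro!: analytic_on_mult)
qed

lemma ent_an_transpose_neg: assumes "\<And>w. F w \<in> carrier_mat k k" "ent_an k F (-z)"
  shows "ent_an k (\<lambda>w. transpose_mat (F (-w))) z"
  unfolding ent_an_def
proof (intro allI impI)
  fix i j assume i: "i < k" and j: "j < k"
  have "(\<lambda>w. F w $$ (j,i)) analytic_on {-z}" using assms(2) i j unfolding ent_an_def by auto
  hence "((\<lambda>w. F w $$ (j,i)) \<circ> uminus) analytic_on {z}"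
    by (intro analytic_on_compose) (auto intro: analytic_intros)
  moreover have "\<And>w. transpose_mat (F (-w)) $$ (i,j) = F (-w) $$ (j,i)"
    using assms(1) i j by (metis carrier_matD index_transpose_mat(1))
  ultimately show "(\<lambda>w. transpose_mat (F (-w)) $$ (i,j)) analytic_on {z}"
    by (simp add: o_def)
qed

lemma const_of_eventually: fixes z :: complex assumes "isCont h z" "\<forall>\<^sub>F w in at z. h w = (c::complex)"
  shows "h z = c"
proof -
  have a: "(h \<longlongrightarrow> h z) (at z)" using assms(1) unfolding isCont_def .
  have b: "(h \<longlongrightarrow> c) (at z)" using assms(2) by (rule tendsto_eventually)
  show ?thesis using tendsto_unique[OF at_neq_bot a b] .
qed

lemma cont_one: assumes F: "\<And>w. F w \<in> carrier_mat k k" and G: "\<And>w. G w \<in> carrier_mat k k"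
  and aF: "ent_an k F z" and aG: "ent_an k G z"
  and ev: "\<forall>\<^sub>F w in at z. F w * G w = 1\<^sub>m k"
  shows "F z * G z = 1\<^sub>m k"
proof (rule eq_matI)
  fix i j assume "i < dim_row (1\<^sub>m k :: complex mat)" "j < dim_col (1\<^sub>m k :: complex mat)"
  hence i: "i < k" and j: "j < k" by auto
  have "(\<lambda>w. (F w * G w) $$ (i,j)) analytic_on {z}"
    using ent_an_mult[OF F G aF aG] i j unfolding ent_an_def by auto
  hence c: "isCont (\<lambda>w. (F w * G w) $$ (i,j)) z" by (rule analytic_at_imp_isCont)
  have "\<forall>\<^sub>F w in at z. (F w * G w) $$ (i,j) = 1\<^sub>m k $$ (i,j)"
    using ev by eventually_elim simp
  from const_of_eventually[OF c this] show "(F z * G z) $$ (i,j) = 1\<^sub>m k $$ (i,j)" .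
qed (use F G in auto)

lemma mat_inv_Cmat: "mat_inv (Cmat m n) = Cmat m n"
  by (rule mat_inv_eq[OF Cmat_carrier Cmat_carrier Cmat_sq])



lemma remove_pole: fixes e h Fn :: "complex \<Rightarrow> complex"
  assumes e: "e analytic_on {z0}" and h: "h analytic_on {z0}" and h0: "h z0 = 0"
    and ev: "\<forall>\<^sub>F w in at z0. Fn w = e w + c / (w - z0) * h w"
  shows "\<exists>g. g analytic_on {z0} \<and> (\<forall>\<^sub>F w in at z0. Fn w = g w)"
proof -
  obtain S where S: "open S" "z0 \<in> S" "h holomorphic_on S" using h analytic_at by blast
  define p where "p = (\<lambda>z. if z = z0 then deriv h z0 else (h z - h z0) / (z - z0))"
  have "p holomorphic_on S" unfolding p_def by (rule pole_lemma_open[OF S(3,1)])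
  hence p: "p analytic_on {z0}" using S analytic_at by blast
  have "(\<lambda>w. e w + c * p w) analytic_on {z0}" using e p by (intro analytic_on_add analytic_on_mult) auto
  moreover have "\<forall>\<^sub>F w in at z0. Fn w = e w + c * p w"
    using ev eventually_neq_at_within[of z0 z0 UNIV]
  proof eventually_elim
    case (elim w) thus ?case by (simp add: p_def h0)
  qed
  ultimately show ?thesis by blast
qed

lemma k_inv_prod: fixes Q :: "complex mat"
  assumes Q: "Q \<in> carrier_mat k k" and QQ: "Q * Q = Q" and ab: "a + b + a * b = 0"
  shows "(1\<^sub>m k + a \<cdot>\<^sub>m Q) * (1\<^sub>m k + b \<cdot>\<^sub>m Q) = 1\<^sub>m k"
proof -
  have "(1\<^sub>m k + a \<cdot>\<^sub>m Q) * (1\<^sub>m k + b \<cdot>\<^sub>m Q)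
      = 1\<^sub>m k * (1\<^sub>m k + b \<cdot>\<^sub>m Q) + (a \<cdot>\<^sub>m Q) * (1\<^sub>m k + b \<cdot>\<^sub>m Q)"
    using Q by (intro add_mult_distrib_mat) auto
  also have "\<dots> = (1\<^sub>m k + b \<cdot>\<^sub>m Q) + (a \<cdot>\<^sub>m Q + (a * b) \<cdot>\<^sub>m (Q * Q))"
  proof -
    have c: "a \<cdot>\<^sub>m Q \<in> carrier_mat k k" "b \<cdot>\<^sub>m Q \<in> carrier_mat k k" using Q by auto
    have 1: "(a \<cdot>\<^sub>m Q) * (1\<^sub>m k + b \<cdot>\<^sub>m Q) = (a \<cdot>\<^sub>m Q) * 1\<^sub>m k + (a \<cdot>\<^sub>m Q) * (b \<cdot>\<^sub>m Q)"
      by (rule mult_add_distrib_mat[OF c(1) one_carrier_mat c(2)])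
    have 2: "(a \<cdot>\<^sub>m Q) * 1\<^sub>m k = a \<cdot>\<^sub>m Q" using c(1) by (rule right_mult_one_mat)
    have 3: "(a \<cdot>\<^sub>m Q) * (b \<cdot>\<^sub>m Q) = (a * b) \<cdot>\<^sub>m (Q * Q)"
      using Q by (simp add: mult_smult_assoc_mat[OF Q c(2)] mult_smult_distrib[OF Q Q], intro eq_matI, auto)
    have 4: "1\<^sub>m k * (1\<^sub>m k + b \<cdot>\<^sub>m Q) = 1\<^sub>m k + b \<cdot>\<^sub>m Q"
      using c by (intro left_mult_one_mat[of _ k k]) auto
    show ?thesis unfolding 1 2 3 4 ..
  qed
  also have "\<dots> = 1\<^sub>m k"
  proof (rule eq_matI)
    fix i j assume "i < dim_row (1\<^sub>m k :: complex mat)" "j < dim_col (1\<^sub>m k :: complex mat)"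
    hence i: "i < k" and j: "j < k" by auto
    have "b * Q $$ (i,j) + (a * Q $$ (i,j) + a * b * Q $$ (i,j)) = (a + b + a * b) * Q $$ (i,j)"
      by (simp add: algebra_simps)
    thus "(1\<^sub>m k + b \<cdot>\<^sub>m Q + (a \<cdot>\<^sub>m Q + (a * b) \<cdot>\<^sub>m (Q * Q))) $$ (i,j) = 1\<^sub>m k $$ (i,j)"
      using i j Q ab unfolding QQ by auto
  qed (use Q in auto)
  finally show ?thesis .
qed

lemma compl_idem: fixes P :: "complex mat"
  assumes P: "P \<in> carrier_mat k k" and PP: "P * P = P"
  shows "(1\<^sub>m k - P) * (1\<^sub>m k - P) = 1\<^sub>m k - P"
proof -
  have "(1\<^sub>m k - P) * (1\<^sub>m k - P) = 1\<^sub>m k * (1\<^sub>m k - P) - P * (1\<^sub>m k - P)"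
    using P by (intro minus_mult_distrib_mat) auto
  also have "\<dots> = (1\<^sub>m k - P) - (P - P * P)"
    using mult_minus_distrib_mat[OF P one_carrier_mat P] right_mult_one_mat[OF P] P by simp
  also have "\<dots> = 1\<^sub>m k - P" unfolding PP using P by (intro eq_matI) auto
  finally show ?thesis .
qed

lemma Cmat_cancel: "X \<in> carrier_mat (Nd m n) k \<Longrightarrow> Cmat m n * (Cmat m n * X) = X"
proof -
  assume X: "X \<in> carrier_mat (Nd m n) k"
  have "Cmat m n * (Cmat m n * X) = (Cmat m n * Cmat m n) * X"
    by (rule assoc_mult_mat[symmetric, OF Cmat_carrier Cmat_carrier X])
  thus ?thesis using X by (simp add: Cmat_sq)
qed



theorem mainTheorem4:
  fixes m n :: nat and \<alpha> :: complex and P :: "complex mat" and V :: "complex vec set"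
    and f :: "complex \<Rightarrow> complex mat"
  assumes alpha: "\<alpha> \<noteq> 0"
    and proj: "O_proj m n P V"
    and fcar: "\<And>z. f z \<in> carrier_mat (Nd m n) (Nd m n)"
    and fmero: "\<And>i j. i < Nd m n \<Longrightarrow> j < Nd m n \<Longrightarrow> (\<lambda>z. f z $$ (i,j)) meromorphic_on UNIV"
    and fSL: "\<forall>\<^sub>\<approx>z\<in>UNIV. det (f z) = 1"
    and fsym: "\<forall>\<^sub>\<approx>z\<in>UNIV. sigma_inv m n (f (- z)) = f z"
    and fhol: "\<And>i j z. i < Nd m n \<Longrightarrow> j < Nd m n \<Longrightarrow> z \<in> {\<alpha>, -\<alpha>} \<Longrightarrow>
                 (\<lambda>w. f w $$ (i,j)) analytic_on {z}"
    and finvhol: "\<And>i j z. i < Nd m n \<Longrightarrow> j < Nd m n \<Longrightarrow> z \<in> {\<alpha>, -\<alpha>} \<Longrightarrow>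
                 (\<lambda>w. mat_inv (f w) $$ (i,j)) analytic_on {z}"
    and nondeg: "nondegenerate_on m n ((\<lambda>x. mat_inv (f \<alpha>) *\<^sub>v x) ` V)"
    and proj': "O_proj m n P' ((\<lambda>x. mat_inv (f \<alpha>) *\<^sub>v x) ` V)"
  shows "holo_at (Nd m n) (\<lambda>z. kmat m n \<alpha> P z * f z * mat_inv (kmat m n \<alpha> P' z)) \<alpha> \<and>
         holo_at (Nd m n) (\<lambda>z. kmat m n \<alpha> P z * f z * mat_inv (kmat m n \<alpha> P' z)) (-\<alpha>)"
proof -
  define N where "N = Nd m n"
  define C where "C = Cmat m n"
  define B where "B = mat_inv (f \<alpha>)"
  define Q where "Q = 1\<^sub>m N - P"
  define Q' where "Q' = 1\<^sub>m N - P'"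
  have Cc: "C \<in> carrier_mat N N" unfolding C_def N_def by (rule Cmat_carrier)
  have CC: "C * C = 1\<^sub>m N" unfolding C_def N_def by (rule Cmat_sq)
  have Ct: "transpose_mat C = C" unfolding C_def by (rule Cmat_transpose)
  have Ci: "mat_inv C = C" unfolding C_def by (rule mat_inv_Cmat)
  have Ccan: "\<And>X k. X \<in> carrier_mat N k \<Longrightarrow> C * (C * X) = X"
    unfolding C_def N_def by (rule Cmat_cancel)
  have fc: "\<And>z. f z \<in> carrier_mat N N" using fcar unfolding N_def .
  have Pc: "P \<in> carrier_mat N N" and PP: "P * P = P" and Ps: "C * transpose_mat P * C = P"
    and PV: "(\<lambda>x. P *\<^sub>v x) ` carrier_vec N = V"
    using proj unfolding O_proj_def sharp_def N_def C_def[symmetric] Ci by auto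
  have P'c: "P' \<in> carrier_mat N N" and P'P': "P' * P' = P'" and P's: "C * transpose_mat P' * C = P'"
    and P'V: "(\<lambda>x. P' *\<^sub>v x) ` carrier_vec N = (\<lambda>x. B *\<^sub>v x) ` V"
    using proj' unfolding O_proj_def sharp_def N_def C_def[symmetric] Ci B_def by auto
  have Qc: "Q \<in> carrier_mat N N" and Q'c: "Q' \<in> carrier_mat N N"
    unfolding Q_def Q'_def using Pc P'c by auto
  have QQ: "Q * Q = Q" unfolding Q_def by (rule compl_idem[OF Pc PP])
  have Q'Q': "Q' * Q' = Q'" unfolding Q'_def by (rule compl_idem[OF P'c P'P'])
  have am: "-\<alpha> \<noteq> \<alpha>" using alpha by auto
  have fa: "f \<alpha> \<in> carrier_mat N N" by (rule fc)
  have cN: "\<And>A B :: complex mat. A \<in> carrier_mat N N \<Longrightarrow> B \<in> carrier_mat N N \<Longrightarrow> A * B \<in> carrier_mat N N"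
    by auto
  have cvN: "\<And>(A::complex mat) x. A \<in> carrier_mat N N \<Longrightarrow> x \<in> carrier_vec N \<Longrightarrow> A *\<^sub>v x \<in> carrier_vec N"
    by auto
  have aN: "\<And>A B D :: complex mat. A \<in> carrier_mat N N \<Longrightarrow> B \<in> carrier_mat N N \<Longrightarrow> D \<in> carrier_mat N N \<Longrightarrow> A * B * D = A * (B * D)"
    by (rule assoc_mult_mat)
  have avN: "\<And>(A::complex mat) B x. A \<in> carrier_mat N N \<Longrightarrow> B \<in> carrier_mat N N \<Longrightarrow> x \<in> carrier_vec N \<Longrightarrow> (A * B) *\<^sub>v x = A *\<^sub>v (B *\<^sub>v x)"
    by (rule assoc_mult_mat_vec)
  have r1: "\<And>A::complex mat. A \<in> carrier_mat N N \<Longrightarrow> A * 1\<^sub>m N = A" by (rule right_mult_one_mat)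
  have l1: "\<And>A::complex mat. A \<in> carrier_mat N N \<Longrightarrow> 1\<^sub>m N * A = A" by (rule left_mult_one_mat)
  have CcN: "\<And>X. X \<in> carrier_mat N N \<Longrightarrow> C * (C * X) = X" using Ccan by blast

  have E1: "\<forall>\<^sub>F w in at \<alpha>. det (f w) = 1"
    using eventually_cosparse_imp_eventually_at[OF fSL, of \<alpha> UNIV] by simp
  have E1m: "\<forall>\<^sub>F w in at (-\<alpha>). det (f w) = 1"
    using eventually_cosparse_imp_eventually_at[OF fSL, of "-\<alpha>" UNIV] by simp
  have E2: "\<forall>\<^sub>F w in at \<alpha>. det (f (-w)) = 1"
  proof -
    have "eventually (\<lambda>w. det (f w) = 1) (filtermap (\<lambda>x. - x) (at \<alpha>))"
      using E1m by (simp add: filtermap_at_minus)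
    thus ?thesis by (simp add: eventually_filtermap)
  qed
  have E3: "\<forall>\<^sub>F w in at \<alpha>. sigma_inv m n (f (- w)) = f w"
    using eventually_cosparse_imp_eventually_at[OF fsym, of \<alpha> UNIV] by simp

  define G where "G = (\<lambda>w. mat N N (\<lambda>(i,j). mat_inv (f w) $$ (i,j)))"
  have Gc: "\<And>w. G w \<in> carrier_mat N N" unfolding G_def by auto
  have fB1: "f \<alpha> * G \<alpha> = 1\<^sub>m N"
  proof (rule cont_one[OF fc Gc])
    show "ent_an N f \<alpha>" unfolding ent_an_def N_def using fhol by auto
    show "ent_an N G \<alpha>" unfolding ent_an_def G_def N_def using finvhol by auto
    show "\<forall>\<^sub>F w in at \<alpha>. f w * G w = 1\<^sub>m N"
      using E1
    proof eventually_elim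
      case (elim w)
      have "G w = mat_inv (f w)" unfolding G_def
        using mat_inv_det1(1)[OF fc elim] by (intro eq_matI) auto
      thus ?case using mat_inv_det1(2)[OF fc elim] by simp
    qed
  qed
  have BG: "B = G \<alpha>" unfolding B_def by (rule mat_inv_eq[OF fc Gc fB1])
  have Bc: "B \<in> carrier_mat N N" using Gc BG by simp
  have fB: "f \<alpha> * B = 1\<^sub>m N" using fB1 BG by simp
  have Bf: "B * f \<alpha> = 1\<^sub>m N" by (rule mat_mult_left_right_inverse[OF fc Bc fB])

  define M where "M = (\<lambda>w. C * transpose_mat (f (-w)) * C)"
  have Mc: "\<And>w. M w \<in> carrier_mat N N" unfolding M_def using Cc fc by auto
  have fM: "f \<alpha> * M \<alpha> = 1\<^sub>m N"
  proof (rule cont_one[OF fc Mc])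
    show "ent_an N f \<alpha>" unfolding ent_an_def N_def using fhol by auto
    have "ent_an N f (-\<alpha>)" unfolding ent_an_def N_def using fhol by auto
    hence "ent_an N (\<lambda>w. transpose_mat (f (-w))) \<alpha>" by (rule ent_an_transpose_neg[OF fc])
    thus "ent_an N M \<alpha>" unfolding M_def using Cc fc
      by (intro ent_an_mult ent_an_const) auto
    show "\<forall>\<^sub>F w in at \<alpha>. f w * M w = 1\<^sub>m N"
      using E2 E3
    proof eventually_elim
      case (elim w)
      have ft: "transpose_mat (f (-w)) \<in> carrier_mat N N" using fc by simp
      have "det (M w) = det (C * transpose_mat (f (-w))) * det C"
        unfolding M_def by (rule det_mult[OF mult_carrier_mat[OF Cc ft] Cc])
      also have "\<dots> = det C * det (f (-w)) * det C"
        using det_mult[OF Cc ft] det_transpose[OF fc] by simp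
      also have "\<dots> = det (C * C)" using elim(1) det_mult[OF Cc Cc] by simp
      also have "\<dots> = 1" unfolding CC by simp
      finally have d: "det (M w) = 1" .
      have "mat_inv (M w) = f w" using elim(2) unfolding sigma_inv_def M_def C_def[symmetric] Ci .
      thus ?case using mat_inv_det1(3)[OF Mc d] by simp
    qed
  qed

  have BM: "B = M \<alpha>" unfolding B_def by (rule mat_inv_eq[OF fc Mc fM])
  have QP: "Q * P = 0\<^sub>m N N"
  proof -
    have "Q * P = 1\<^sub>m N * P - P * P" unfolding Q_def by (rule minus_mult_distrib_mat[OF one_carrier_mat Pc Pc])
    also have "\<dots> = 0\<^sub>m N N" unfolding PP using Pc by (intro eq_matI) auto
    finally show ?thesis .
  qed
  have Q'P': "Q' * P' = 0\<^sub>m N N"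
  proof -
    have "Q' * P' = 1\<^sub>m N * P' - P' * P'" unfolding Q'_def by (rule minus_mult_distrib_mat[OF one_carrier_mat P'c P'c])
    also have "\<dots> = 0\<^sub>m N N" unfolding P'P' using P'c by (intro eq_matI) auto
    finally show ?thesis .
  qed
  have Z1: "Q * f \<alpha> * P' = 0\<^sub>m N N"
  proof (rule mat_zeroI)
    show "Q * f \<alpha> * P' \<in> carrier_mat N N" using Qc fc P'c by auto
    fix x :: "complex vec" assume x: "x \<in> carrier_vec N"
    have "P' *\<^sub>v x \<in> (\<lambda>x. B *\<^sub>v x) ` V" using P'V x by blast
    then obtain v where v: "v \<in> V" and Pv: "P' *\<^sub>v x = B *\<^sub>v v" by blast
    obtain y where y: "y \<in> carrier_vec N" and vy: "v = P *\<^sub>v y" using v PV by blast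
    have "(Q * f \<alpha> * P') *\<^sub>v x = Q *\<^sub>v (f \<alpha> *\<^sub>v (P' *\<^sub>v x))"
      using Qc fa P'c x by (simp add: cN cvN aN avN)
    also have "\<dots> = Q *\<^sub>v (f \<alpha> *\<^sub>v (B *\<^sub>v (P *\<^sub>v y)))" unfolding Pv vy ..
    also have "\<dots> = (Q * f \<alpha> * B * P) *\<^sub>v y" using Qc fa Bc Pc y by (simp add: cN cvN aN avN)
    also have "Q * f \<alpha> * B * P = Q * P" using Qc fa Bc Pc fB by (simp add: cN aN)
    also have "(Q * P) *\<^sub>v y = 0\<^sub>v N" unfolding QP using y by auto
    finally show "(Q * f \<alpha> * P') *\<^sub>v x = 0\<^sub>v N" .
  qed
  have Z2: "Q' * B * P = 0\<^sub>m N N"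
  proof (rule mat_zeroI)
    show "Q' * B * P \<in> carrier_mat N N" using Q'c Bc Pc by auto
    fix x :: "complex vec" assume x: "x \<in> carrier_vec N"
    have "P *\<^sub>v x \<in> V" using PV x by blast
    hence "B *\<^sub>v (P *\<^sub>v x) \<in> (\<lambda>x. P' *\<^sub>v x) ` carrier_vec N" using P'V by blast
    then obtain y where y: "y \<in> carrier_vec N" and Py: "B *\<^sub>v (P *\<^sub>v x) = P' *\<^sub>v y" by blast
    have "(Q' * B * P) *\<^sub>v x = Q' *\<^sub>v (B *\<^sub>v (P *\<^sub>v x))"
      using Q'c Bc Pc x by (simp add: cN cvN aN avN)
    also have "\<dots> = (Q' * P') *\<^sub>v y" unfolding Py using Q'c P'c y by (simp add: cN cvN aN avN)
    also have "\<dots> = 0\<^sub>v N" unfolding Q'P' using y by auto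
    finally show "(Q' * B * P) *\<^sub>v x = 0\<^sub>v N" .
  qed
  define T where "T = transpose_mat (f (-\<alpha>))"
  have Tc: "T \<in> carrier_mat N N" unfolding T_def using fc by simp
  have BT: "B = C * T * C" using BM unfolding M_def T_def by simp
  have TB: "T = C * (B * C)"
    unfolding BT using Cc Tc CC by (simp add: cN aN r1 CcN)
  have fmB: "f (-\<alpha>) = C * transpose_mat B * C"
  proof -
    have "f (-\<alpha>) = transpose_mat T" unfolding T_def by simp
    also have "\<dots> = transpose_mat (B * C) * transpose_mat C"
      unfolding TB by (rule transpose_mult[OF Cc mult_carrier_mat[OF Bc Cc]])
    also have "\<dots> = C * transpose_mat B * C"
      unfolding transpose_mult[OF Bc Cc] Ct ..
    finally show ?thesis .
  qed
  have Q's: "C * transpose_mat Q' * C = Q'"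
  proof -
    have "transpose_mat Q' = 1\<^sub>m N - transpose_mat P'"
      unfolding Q'_def by (simp add: transpose_minus[OF one_carrier_mat P'c])
    hence "C * transpose_mat Q' * C = (C * 1\<^sub>m N - C * transpose_mat P') * C"
      using mult_minus_distrib_mat[OF Cc one_carrier_mat, of "transpose_mat P'"] P'c by simp
    also have "\<dots> = C * 1\<^sub>m N * C - C * transpose_mat P' * C"
      using Cc P'c by (intro minus_mult_distrib_mat) auto
    also have "\<dots> = Q'" unfolding P's Q'_def using Cc CC by (simp add: r1)
    finally show ?thesis .
  qed
  have Z3: "P * f (-\<alpha>) * Q' = 0\<^sub>m N N"
  proof -
    have Z2t: "transpose_mat P * transpose_mat B * transpose_mat Q' = 0\<^sub>m N N"
    proof -
      have "transpose_mat (Q' * B * P) = transpose_mat P * transpose_mat B * transpose_mat Q'"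
        using Q'c Bc Pc by (simp add: transpose_mult[of _ N N _ N])
      thus ?thesis unfolding Z2 by simp
    qed
    have "P * f (-\<alpha>) * Q' = (C * transpose_mat P * C) * (C * transpose_mat B * C) * (C * transpose_mat Q' * C)"
      unfolding Ps Q's fmB ..
    also have "\<dots> = C * ((transpose_mat P * transpose_mat B * transpose_mat Q') * C)"
      using Cc Pc Bc Q'c by (simp add: cN aN CcN)
    also have "\<dots> = 0\<^sub>m N N" unfolding Z2t using Cc by simp
    finally show ?thesis .
  qed

  define K1 where "K1 = (\<lambda>w. 1\<^sub>m N + (2 * \<alpha> / (w - \<alpha>)) \<cdot>\<^sub>m Q)"
  define K2 where "K2 = (\<lambda>w. 1\<^sub>m N + (- 2 * \<alpha> / (w + \<alpha>)) \<cdot>\<^sub>m Q')"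
  have K1c: "\<And>w. K1 w \<in> carrier_mat N N" unfolding K1_def using Qc by auto
  have K2c: "\<And>w. K2 w \<in> carrier_mat N N" unfolding K2_def using Q'c by auto
  have kP: "\<And>w. kmat m n \<alpha> P w = K1 w" unfolding kmat_def K1_def Q_def N_def ..
  have kP': "\<And>w. w \<noteq> \<alpha> \<Longrightarrow> w \<noteq> -\<alpha> \<Longrightarrow> mat_inv (kmat m n \<alpha> P' w) = K2 w"
  proof -
    fix w assume w1: "w \<noteq> \<alpha>" and w2: "w \<noteq> -\<alpha>"
    have d1: "w - \<alpha> \<noteq> 0" and d2: "w + \<alpha> \<noteq> 0" using w1 w2 by (auto simp: add_eq_0_iff)
    have ab: "2 * \<alpha> / (w - \<alpha>) + - 2 * \<alpha> / (w + \<alpha>) + 2 * \<alpha> / (w - \<alpha>) * (- 2 * \<alpha> / (w + \<alpha>)) = 0"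
      using d1 d2 by (simp add: field_simps)
    have kc: "kmat m n \<alpha> P' w \<in> carrier_mat N N" unfolding kmat_def N_def[symmetric] using P'c by auto
    have "kmat m n \<alpha> P' w * K2 w = 1\<^sub>m N"
      unfolding kmat_def N_def[symmetric] K2_def Q'_def[symmetric]
      by (rule k_inv_prod[OF Q'c Q'Q' ab])
    thus "mat_inv (kmat m n \<alpha> P' w) = K2 w" by (rule mat_inv_eq[OF kc K2c])
  qed
  have an1: "(\<lambda>w. 2 * \<alpha> / (w - \<alpha>)) analytic_on {-\<alpha>}"
    using alpha by (intro analytic_intros) auto
  have an2: "(\<lambda>w. - 2 * \<alpha> / (w + \<alpha>)) analytic_on {\<alpha>}"
    using alpha by (intro analytic_intros) auto
  have aK1: "ent_an N K1 (-\<alpha>)" unfolding K1_def using Qc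
    by (intro ent_an_add ent_an_smult ent_an_const an1) auto
  have aK2: "ent_an N K2 \<alpha>" unfolding K2_def using Q'c
    by (intro ent_an_add ent_an_smult ent_an_const an2) auto
  have afa: "ent_an N f \<alpha>" unfolding ent_an_def N_def using fhol by auto
  have afm: "ent_an N f (-\<alpha>)" unfolding ent_an_def N_def using fhol by auto
  have K2a: "K2 \<alpha> = P'"
  proof -
    have e: "- 2 * \<alpha> / (\<alpha> + \<alpha>) = -1" using alpha by (simp add: field_simps)
    show ?thesis unfolding K2_def e Q'_def using P'c by (intro eq_matI) auto
  qed
  have K1m: "K1 (-\<alpha>) = P"
  proof -
    have e: "2 * \<alpha> / (- \<alpha> - \<alpha>) = -1" using alpha by (simp add: field_simps)
    show ?thesis unfolding K1_def e Q_def using Pc by (intro eq_matI) auto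
  qed
  have entry: "\<And>X Z c i j. X \<in> carrier_mat N N \<Longrightarrow> Z \<in> carrier_mat N N \<Longrightarrow> i < N \<Longrightarrow> j < N \<Longrightarrow>
      (X + (c::complex) \<cdot>\<^sub>m Z) $$ (i,j) = X $$ (i,j) + c * Z $$ (i,j)"
    by auto
  have evn1: "\<forall>\<^sub>F w in at \<alpha>. w \<noteq> -\<alpha>" by (rule eventually_neq_at_within)
  have evn2: "\<forall>\<^sub>F w in at (-\<alpha>). w \<noteq> \<alpha>" by (rule eventually_neq_at_within)
  have evn3: "\<forall>\<^sub>F w in at \<alpha>. w \<noteq> \<alpha>" by (rule eventually_neq_at_within)
  have evn4: "\<forall>\<^sub>F w in at (-\<alpha>). w \<noteq> -\<alpha>" by (rule eventually_neq_at_within)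
  define Ft where "Ft = (\<lambda>z. kmat m n \<alpha> P z * f z * mat_inv (kmat m n \<alpha> P' z))"
  have H1: "holo_at N Ft \<alpha>"
    unfolding holo_at_def
  proof (intro allI impI)
    fix i j assume i: "i < N" and j: "j < N"
    define X where "X = (\<lambda>w. f w * K2 w)"
    have Xc: "\<And>w. X w \<in> carrier_mat N N" unfolding X_def using fc K2c by (simp add: cN)
    have aX: "ent_an N X \<alpha>" unfolding X_def by (rule ent_an_mult[OF fc K2c afa aK2])
    have aQX: "ent_an N (\<lambda>w. Q * X w) \<alpha>" by (rule ent_an_mult[OF _ Xc ent_an_const aX]) (rule Qc)
    have e: "(\<lambda>w. X w $$ (i,j)) analytic_on {\<alpha>}" using aX i j unfolding ent_an_def by auto
    have h: "(\<lambda>w. (Q * X w) $$ (i,j)) analytic_on {\<alpha>}" using aQX i j unfolding ent_an_def by auto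
    have h0: "(Q * X \<alpha>) $$ (i,j) = 0"
      unfolding X_def K2a using Z1 Qc fa P'c i j by (simp add: aN)
    have ev: "\<forall>\<^sub>F w in at \<alpha>. Ft w $$ (i,j) = X w $$ (i,j) + (2 * \<alpha>) / (w - \<alpha>) * (Q * X w) $$ (i,j)"
      using evn1 evn3
    proof eventually_elim
      case (elim w)
      have "Ft w = K1 w * X w" unfolding Ft_def kP kP'[OF elim(2,1)] X_def
        using K1c fc K2c by (simp add: aN)
      also have "\<dots> = 1\<^sub>m N * X w + (2 * \<alpha> / (w - \<alpha>) \<cdot>\<^sub>m Q) * X w"
        unfolding K1_def using Qc Xc by (intro add_mult_distrib_mat) auto
      also have "\<dots> = X w + (2 * \<alpha> / (w - \<alpha>)) \<cdot>\<^sub>m (Q * X w)"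
        using l1[OF Xc] mult_smult_assoc_mat[OF Qc Xc] by simp
      finally show ?case using entry[OF Xc cN[OF Qc Xc] i j] by simp
    qed
    show "\<exists>g. g analytic_on {\<alpha>} \<and> (\<forall>\<^sub>F w in at \<alpha>. Ft w $$ (i,j) = g w)"
      by (rule remove_pole[OF e h h0 ev])
  qed
  have H2: "holo_at N Ft (-\<alpha>)"
    unfolding holo_at_def
  proof (intro allI impI)
    fix i j assume i: "i < N" and j: "j < N"
    define Y where "Y = (\<lambda>w. K1 w * f w)"
    have Yc: "\<And>w. Y w \<in> carrier_mat N N" unfolding Y_def using fc K1c by (simp add: cN)
    have aY: "ent_an N Y (-\<alpha>)" unfolding Y_def by (rule ent_an_mult[OF K1c fc aK1 afm])
    have aYQ: "ent_an N (\<lambda>w. Y w * Q') (-\<alpha>)" by (rule ent_an_mult[OF Yc _ aY ent_an_const]) (rule Q'c)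
    have e: "(\<lambda>w. Y w $$ (i,j)) analytic_on {-\<alpha>}" using aY i j unfolding ent_an_def by auto
    have h: "(\<lambda>w. (Y w * Q') $$ (i,j)) analytic_on {-\<alpha>}" using aYQ i j unfolding ent_an_def by auto
    have h0: "(Y (-\<alpha>) * Q') $$ (i,j) = 0"
      unfolding Y_def K1m using Z3 i j by simp
    have ev: "\<forall>\<^sub>F w in at (-\<alpha>). Ft w $$ (i,j) = Y w $$ (i,j) + (- 2 * \<alpha>) / (w - (-\<alpha>)) * (Y w * Q') $$ (i,j)"
      using evn2 evn4
    proof eventually_elim
      case (elim w)
      have "Ft w = Y w * K2 w" unfolding Ft_def kP kP'[OF elim(1,2)] Y_def ..
      also have "\<dots> = Y w * 1\<^sub>m N + Y w * ((- 2 * \<alpha> / (w + \<alpha>)) \<cdot>\<^sub>m Q')"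
        unfolding K2_def using Q'c by (intro mult_add_distrib_mat[OF Yc]) auto
      also have "\<dots> = Y w + (- 2 * \<alpha> / (w + \<alpha>)) \<cdot>\<^sub>m (Y w * Q')"
        using r1[OF Yc] mult_smult_distrib[OF Yc Q'c] by simp
      finally show ?case using entry[OF Yc cN[OF Yc Q'c] i j] by simp
    qed
    show "\<exists>g. g analytic_on {-\<alpha>} \<and> (\<forall>\<^sub>F w in at (-\<alpha>). Ft w $$ (i,j) = g w)"
      by (rule remove_pole[OF e h h0 ev])
  qed
  show ?thesis using H1 H2 unfolding Ft_def N_def by blast
qed


end
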